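(* Assume Conditions (i), (ii), (iii). For $s\in S^1$ let $X_s^\omega=X^\omega\cap(\{s\}\times Y^\omega)$; for each connected component $G_s^\omega$ of $X_s^\omega$ let $|G_s^\omega|$ be its largest radius, and let $|G^\omega|$ be the supremum of $|G_s^\omega|$ over all $s\in S^1$ and all connected components $G_s^\omega$ of $X_s^\omega$. Then for every $l>0$, $P(\{\omega:|G^\omega|\ge l\})=0$.
   Context: Setting. $(\Omega,\mathcal F,P,(\theta_t)_{t\in\mathbb R})$ is a metric dynamical system: each $\theta_t:\Omega\to\Omega$ is measurable and $P$-preserving, $\theta_0=\mathrm{id}$, $\theta_{t+u}=\theta_t\circ\theta_u$. $S^1=\mathbb R/\mathbb Z$; distances $|s-s'|$ and intervals $[s-\delta,s+\delta]$ on $S^1$ are taken in the lifted real coordinate. A $C^1$ perfect cocycle is a measurable map $\gamma:\mathbb R\times\Omega\times(S^1\times\mathbb R^d)\to S^1\times\mathbb R^d$, $(t,\omega,z)\mapsto \gamma^\omega_z(t)=\gamma^\omega(t)z$, such that for every $\omega$: $\gamma^\omega(0)=\mathrm{id}$; $\gamma^\omega_z(t_1+t_2)=\gamma^{\theta_{t_1}\omega}_{\gamma^\omega_z(t_1)}(t_2)$ for all $z$, $t_1,t_2$; $(t,z)\mapsto\gamma^\omega_z(t)$ is continuous; each $\gamma^\omega(t)$ is a $C^1$ diffeomorphism. Throughout, $\gamma$ is a $C^1$ perfect cocycle. Condition (i): there are a random compact set $\omega\mapsto Y^\omega\subset\mathbb R^d$ and $t_1>0$ such that for all $s\in S^1$,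 $y\in Y^\omega$, writing $\gamma^\omega_{(s,y)}(t_1)=(s',y')$, the continuous lift of the $S^1$-coordinate along $t\mapsto\gamma^\omega_{(s,y)}(t)$, $t\in[0,t_1]$, increases by exactly $1$ (i.e. $s'=s+1$ in the lift), and $y'\in Y^{\theta_{t_1}\omega}$; moreover there is a random compact set $X^\omega\subset S^1\times Y^\omega$ with $\gamma^\omega(t)X^\omega=X^{\theta_t\omega}$ for all $t\in\mathbb R$, whose projection onto $S^1$ is all of $S^1$, and whose diameter in the $y$-direction is less than a constant $b^*>0$. Notation. $\hat\theta=\theta_{t_1}$ and $\hat\theta^k$ is its $k$-fold iterate ($k\in\mathbb Z$). $H^\omega(s,y):=\gamma^\omega_{(s,y)}(t_1)=(h(s)\bmod 1,g^\omega(s,y))$ with $h(s)=s+1$; $H^{(n),\omega}:=H^{\hat\theta^{n-1}\omega}\circ\dots\circ H^\omega=(h^{(n)}(s)\bmod1,g^{(n),\omega}(s,y))$. Condition (ii): there are $\delta_1>0$, $L_1>0$ such that for every $(s,y)\in X^\omega$ there is a Lipschitz function $f:S^1\to\mathbb R^d$ with constant $L_1$, $f(s)=y$, and $(s^\#,f(s^\#))\in X^\omega$ for all $s^\#\in[s-\delta_1,s+\delta_1]$. For $\varepsilon>0$, $B(X^\omega,\varepsilon):=\{(s,y'):\exists (s,y)\in X^\omega,\ \|y'-y\|\le\varepsilon\}$. Condition (iii): there are $\lambda<1$, $\varepsilon_1>0$, $n_0\in\mathbb N$ such that for a.e. $\omega$, $\|D_yg^{(n_0),\omega}(s,y)\|\le\lambda$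 for all $(s,y)\in B(X^\omega,\varepsilon_1)$, and $c:=\operatorname{ess\,sup}_\omega\sup_{(s,y)\in B(X^\omega,\varepsilon_1)}\|\partial_s g^{(n_0),\omega}(s,y)\|<\infty$. *)

theory Defs
  imports "HOL-Probability.Probability"
begin

text \<open>The circle S1 = R/Z is represented through its universal cover R (lifted
coordinate): a point of S1 x R^d is a pair (s, y) :: real \<times> 'd, all objects being
1-periodic in s.\<close>

definition metric_dynamical_system ::
  "'w measure \<Rightarrow> (real \<Rightarrow> 'w \<Rightarrow> 'w) \<Rightarrow> bool" where
  "metric_dynamical_system M \<theta> \<longleftrightarrow>
     prob_space M \<and>
     (\<forall>t. \<theta> t \<in> measurable M M \<and> distr M M (\<theta> t) = M) \<and>
     (\<forall>\<omega>\<in>space M. \<theta> 0 \<omega> = \<omega>) \<and>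
     (\<forall>t u. \<forall>\<omega>\<in>space M. \<theta> (t + u) \<omega> = \<theta> t (\<theta> u \<omega>))"

definition C1_map :: "('a::euclidean_space \<Rightarrow> 'a) \<Rightarrow> bool" where
  "C1_map \<phi> \<longleftrightarrow> (\<exists>D :: 'a \<Rightarrow> ('a \<Rightarrow>\<^sub>L 'a).
      (\<forall>x. (\<phi> has_derivative blinfun_apply (D x)) (at x)) \<and> continuous_on UNIV D)"

definition C1_diffeo :: "('a::euclidean_space \<Rightarrow> 'a) \<Rightarrow> bool" where
  "C1_diffeo \<phi> \<longleftrightarrow> bij \<phi> \<and> C1_map \<phi> \<and> C1_map (inv \<phi>)"

definition circle_lift :: "(real \<times> 'd::euclidean_space \<Rightarrow> real \<times> 'd) \<Rightarrow> bool" where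
  "circle_lift \<phi> \<longleftrightarrow> (\<forall>s y. \<phi> (s + 1, y) = \<phi> (s, y) + (1, 0))"

text \<open>C^1 perfect cocycle over theta on S1 x R^d, given by its lift to R x R^d
(the lift is the continuous one with gamma(0) = id).\<close>
definition C1_perfect_cocycle ::
  "'w measure \<Rightarrow> (real \<Rightarrow> 'w \<Rightarrow> 'w) \<Rightarrow>
   ('w \<Rightarrow> real \<Rightarrow> real \<times> 'd::euclidean_space \<Rightarrow> real \<times> 'd) \<Rightarrow> bool" where
  "C1_perfect_cocycle M \<theta> \<gamma> \<longleftrightarrow>
     (\<lambda>(t, \<omega>, z). \<gamma> \<omega> t z) \<in> borel_measurable (borel \<Otimes>\<^sub>M M \<Otimes>\<^sub>M borel) \<and>
     (\<forall>\<omega>\<in>space M.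
        \<gamma> \<omega> 0 = id \<and>
        (\<forall>z t1 t2. \<gamma> \<omega> (t1 + t2) z = \<gamma> (\<theta> t1 \<omega>) t2 (\<gamma> \<omega> t1 z)) \<and>
        continuous_on UNIV (\<lambda>(t, z). \<gamma> \<omega> t z) \<and>
        (\<forall>t. circle_lift (\<gamma> \<omega> t) \<and> C1_diffeo (\<gamma> \<omega> t)))"

definition random_compact_set :: "'w measure \<Rightarrow> ('w \<Rightarrow> 'd::euclidean_space set) \<Rightarrow> bool" where
  "random_compact_set M K \<longleftrightarrow>
     (\<forall>\<omega>\<in>space M. compact (K \<omega>)) \<and>
     (\<forall>x. (\<lambda>\<omega>. infdist x (K \<omega>)) \<in> borel_measurable M)"

text \<open>Random compact set in S1 x R^d, represented by its 1-periodic preimage in R x R^d.\<close>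
definition random_compact_set_cyl ::
  "'w measure \<Rightarrow> ('w \<Rightarrow> (real \<times> 'd::euclidean_space) set) \<Rightarrow> bool" where
  "random_compact_set_cyl M K \<longleftrightarrow>
     (\<forall>\<omega>\<in>space M. (\<forall>s y. (s, y) \<in> K \<omega> \<longleftrightarrow> (s + 1, y) \<in> K \<omega>) \<and>
                  compact (K \<omega> \<inter> ({0..1} \<times> UNIV))) \<and>
     (\<forall>x. (\<lambda>\<omega>. infdist x (K \<omega>)) \<in> borel_measurable M)"

fun Hn :: "(real \<Rightarrow> 'w \<Rightarrow> 'w) \<Rightarrow> ('w \<Rightarrow> real \<Rightarrow> 'z \<Rightarrow> 'z) \<Rightarrow> real \<Rightarrow> nat \<Rightarrow> 'w \<Rightarrow> 'z \<Rightarrow> 'z" where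
  "Hn \<theta> \<gamma> t1 0 \<omega> = id"
| "Hn \<theta> \<gamma> t1 (Suc n) \<omega> = \<gamma> (((\<theta> t1) ^^ n) \<omega>) t1 \<circ> Hn \<theta> \<gamma> t1 n \<omega>"

definition gn :: "(real \<Rightarrow> 'w \<Rightarrow> 'w) \<Rightarrow> ('w \<Rightarrow> real \<Rightarrow> real \<times> 'd \<Rightarrow> real \<times> 'd)
                   \<Rightarrow> real \<Rightarrow> nat \<Rightarrow> 'w \<Rightarrow> real \<times> 'd \<Rightarrow> 'd" where
  "gn \<theta> \<gamma> t1 n \<omega> z = snd (Hn \<theta> \<gamma> t1 n \<omega> z)"

definition nbhd :: "(real \<times> 'd::real_normed_vector) set \<Rightarrow> real \<Rightarrow> (real \<times> 'd) set" where
  "nbhd X \<epsilon> = {(s, y'). \<exists>y. (s, y) \<in> X \<and> norm (y' - y) \<le> \<epsilon>}"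

definition fiber :: "(real \<times> 'd) set \<Rightarrow> real \<Rightarrow> 'd set" where
  "fiber X s = {y. (s, y) \<in> X}"

text \<open>|G| : largest radius of a set, taken as half its diameter (diameter = sup of distances).\<close>
definition radius :: "'d::metric_space set \<Rightarrow> real" where
  "radius G = diameter G / 2"

definition Gsize :: "(real \<times> 'd::euclidean_space) set \<Rightarrow> ereal" where
  "Gsize X = (SUP G \<in> (\<Union>s. components (fiber X s)). ereal (radius G))"

end

theory Submission
  imports Defs
begin


lemma chain_bound:
  fixes G :: "'a::metric_space set" and f :: "'a \<Rightarrow> 'b::metric_space"
    and P :: "'c \<Rightarrow> 'a set"
  assumes conn: "connected G" and finC: "finite C"
    and cov: "G \<subseteq> (\<Union>c\<in>C. P c)"
    and op: "\<And>c. c \<in> C \<Longrightarrow> openin (top_of_set G) (P c)"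
    and sm: "\<And>c u v. c \<in> C \<Longrightarrow> u \<in> P c \<Longrightarrow> v \<in> P c \<Longrightarrow> dist (f u) (f v) \<le> \<delta>"
    and x: "x \<in> G" and x': "x' \<in> G"
  shows "dist (f x) (f x') \<le> (real (card C) + 1) * \<delta>"
proof -
  obtain c0 where c0: "c0 \<in> C" "x \<in> P c0" using cov x by blast
  have d0: "0 \<le> \<delta>" using sm[OF c0(1) c0(2) c0(2)] by simp
  define \<Phi> where "\<Phi> A = A \<union> {c\<in>C. \<exists>c'\<in>A. P c \<inter> P c' \<noteq> {}}" for A
  define R where "R = rec_nat {c0} (\<lambda>_ A. \<Phi> A)"
  have R0: "R 0 = {c0}" and RS: "\<And>m. R (Suc m) = \<Phi> (R m)" by (simp_all add: R_def)
  have RC: "R m \<subseteq> C" for m by (induction m) (auto simp: R0 RS \<Phi>_def c0)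
  have Rmono: "R m \<subseteq> R (Suc m)" for m by (auto simp: RS \<Phi>_def)
  have Rmono': "m \<le> n \<Longrightarrow> R m \<subseteq> R n" for m n
    using lift_Suc_mono_le[of R, OF Rmono] by blast
  have bound: "\<forall>c\<in>R m. \<forall>v\<in>P c. dist (f x) (f v) \<le> (real m + 1) * \<delta>" for m
  proof (induction m)
    case 0
    then show ?case using sm[OF c0(1) c0(2)] by (simp add: R0)
  next
    case (Suc m)
    show ?case
    proof (intro ballI)
      fix c v assume c: "c \<in> R (Suc m)" and v: "v \<in> P c"
      show "dist (f x) (f v) \<le> (real (Suc m) + 1) * \<delta>"
      proof (cases "c \<in> R m")
        case True
        then have "dist (f x) (f v) \<le> (real m + 1) * \<delta>" using Suc v by blast
        then show ?thesis using d0 by (simp add: algebra_simps)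
      next
        case False
        then obtain c' w where cC: "c \<in> C" and c': "c' \<in> R m" and w: "w \<in> P c" "w \<in> P c'"
          using c by (auto simp: RS \<Phi>_def)
        have "dist (f x) (f w) \<le> (real m + 1) * \<delta>" using Suc c' w by blast
        moreover have "dist (f w) (f v) \<le> \<delta>" using sm[OF cC w(1) v] .
        ultimately show ?thesis using dist_triangle[of "f x" "f v" "f w"] by (simp add: algebra_simps)
      qed
    qed
  qed
  define W where "W = (\<Union>c\<in>(\<Union>m. R m). P c)"
  have Wo: "openin (top_of_set G) W" unfolding W_def
    using RC op by (intro openin_Union) blast
  have compl: "G - W = (\<Union>c\<in>C - (\<Union>m. R m). P c)"
  proof
    show "G - W \<subseteq> (\<Union>c\<in>C - (\<Union>m. R m). P c)"
    proof
      fix y assume y: "y \<in> G - W"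
      then obtain c where "c \<in> C" "y \<in> P c" using cov by blast
      moreover have "c \<notin> (\<Union>m. R m)"
      proof
        assume "c \<in> (\<Union>m. R m)"
        then have "y \<in> W" using calculation(2) unfolding W_def by (rule UN_I)
        then show False using y by simp
      qed
      ultimately show "y \<in> (\<Union>c\<in>C - (\<Union>m. R m). P c)" by blast
    qed
    show "(\<Union>c\<in>C - (\<Union>m. R m). P c) \<subseteq> G - W"
    proof
      fix y assume "y \<in> (\<Union>c\<in>C - (\<Union>m. R m). P c)"
      then obtain c where c: "c \<in> C" "\<forall>m. c \<notin> R m" "y \<in> P c" by blast
      have "y \<in> G" using openin_subset[OF op[OF c(1)]] c(3) by auto
      moreover have "y \<notin> W"
      proof
        assume "y \<in> W"
        then obtain m c' where "c' \<in> R m" "y \<in> P c'" by (auto simp: W_def)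
        then have "c \<in> R (Suc m)" using c by (auto simp: RS \<Phi>_def)
        then show False using c by blast
      qed
      ultimately show "y \<in> G - W" by blast
    qed
  qed
  have Wc: "closedin (top_of_set G) W"
    unfolding closedin_def
  proof
    show "W \<subseteq> topspace (top_of_set G)" using Wo openin_subset by blast
    show "openin (top_of_set G) (topspace (top_of_set G) - W)"
      using compl op by (auto intro!: openin_Union)
  qed
  have "x \<in> W" using c0 by (auto simp: W_def R0 intro!: exI[of _ 0])
  then have "W = G" using conn Wo Wc unfolding connected_clopen by blast
  with x' obtain m c where c: "c \<in> R m" "x' \<in> P c" by (auto simp: W_def)
  have stab: "\<exists>i<card C. R i = R (Suc i)"
  proof (rule ccontr)
    assume "\<not> ?thesis"
    then have st: "\<forall>i<card C. R i \<subset> R (Suc i)" using Rmono by blast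
    have "i \<le> card C \<Longrightarrow> card (R i) \<ge> i + 1" for i
    proof (induction i)
      case 0 then show ?case by (simp add: R0)
    next
      case (Suc i)
      then have "R i \<subset> R (Suc i)" using st by simp
      moreover have "finite (R (Suc i))" using RC finC finite_subset by blast
      ultimately have "card (R i) < card (R (Suc i))" by (simp add: psubset_card_mono)
      then show ?case using Suc by simp
    qed
    then have "card (R (card C)) \<ge> card C + 1" by simp
    moreover have "card (R (card C)) \<le> card C" using RC finC card_mono by blast
    ultimately show False by simp
  qed
  then obtain i where i: "i < card C" "R i = R (Suc i)" by blast
  have const: "j \<ge> i \<Longrightarrow> R j = R i" for j
  proof (induction j rule: dec_induct)
    case base then show ?case by simp
  next
    case (step j) then show ?case using i(2) RS[of j] RS[of i] by metis
  qed
  have "c \<in> R (card C)"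
  proof (cases "m \<le> card C")
    case True then show ?thesis using Rmono' c(1) by blast
  next
    case False then show ?thesis using const[of m] const[of "card C"] i(1) c(1) by simp
  qed
  then show ?thesis using bound c(2) by blast
qed



lemma per_nat:
  assumes per: "\<forall>s y. (s, y) \<in> A \<longleftrightarrow> (s + 1, y) \<in> A"
  shows "(s, y) \<in> A \<longleftrightarrow> (s + real n, y) \<in> A"
proof (induction n)
  case 0 then show ?case by simp
next
  case (Suc n)
  have "(s + real n, y) \<in> A \<longleftrightarrow> (s + real n + 1, y) \<in> A" using per by blast
  then show ?case using Suc by (simp add: add_ac)
qed

lemma per_int:
  assumes per: "\<forall>s y. (s, y) \<in> A \<longleftrightarrow> (s + 1, y) \<in> A"
  shows "(s, y) \<in> A \<longleftrightarrow> (s + real_of_int n, y) \<in> A"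
proof (cases "n \<ge> 0")
  case True
  then obtain m where "n = int m" by (metis nonneg_eq_int)
  then show ?thesis using per_nat[OF per, of s y m] by simp
next
  case False
  define m where "m = nat (- n)"
  have m: "n = - int m" using False by (simp add: m_def)
  have "(s - real m, y) \<in> A \<longleftrightarrow> (s - real m + real m, y) \<in> A" using per_nat[OF per, of "s - real m" y m] by (simp only:)
  moreover have "s - real m + real m = s" "s + real_of_int n = s - real m" using m by simp_all
  ultimately show ?thesis by simp
qed

lemma per_strip:
  fixes A :: "(real \<times> 'b) set"
  assumes per: "\<forall>s y. (s, y) \<in> A \<longleftrightarrow> (s + 1, y) \<in> A"
  shows "(s, y) \<in> A \<longleftrightarrow> (s - of_int (floor s), y) \<in> A \<inter> ({0..1} \<times> UNIV)"
proof -
  have "(s, y) \<in> A \<longleftrightarrow> (s + real_of_int (- floor s), y) \<in> A" by (rule per_int[OF per])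
  moreover have "s - of_int (floor s) \<in> {0..1}"
  proof -
    have "of_int (floor s) \<le> s" "s < of_int (floor s) + 1" by linarith+
    then show ?thesis unfolding atLeastAtMost_iff by linarith
  qed
  ultimately show ?thesis by simp
qed

lemma snd_bounded:
  fixes A :: "(real \<times> 'd::euclidean_space) set"
  assumes per: "\<forall>s y. (s, y) \<in> A \<longleftrightarrow> (s + 1, y) \<in> A"
    and cpt: "compact (A \<inter> ({0..1} \<times> UNIV))"
  shows "bounded (snd ` A)"
proof -
  have "snd ` A \<subseteq> snd ` (A \<inter> ({0..1} \<times> UNIV))"
  proof
    fix y assume "y \<in> snd ` A"
    then obtain s where "(s, y) \<in> A" by force
    then have "(s - of_int (floor s), y) \<in> A \<inter> ({0..1} \<times> UNIV)" using per_strip[OF per] by blast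
    then show "y \<in> snd ` (A \<inter> ({0..1} \<times> UNIV))" by force
  qed
  moreover have "compact (snd ` (A \<inter> ({0..1} \<times> UNIV)))"
    by (intro compact_continuous_image cpt continuous_intros)
  ultimately show ?thesis by (meson bounded_subset compact_imp_bounded)
qed

lemma fiber_compact:
  fixes A :: "(real \<times> 'd::euclidean_space) set"
  assumes per: "\<forall>s y. (s, y) \<in> A \<longleftrightarrow> (s + 1, y) \<in> A"
    and cpt: "compact (A \<inter> ({0..1} \<times> UNIV))"
  shows "compact (fiber A s)"
proof -
  define a where "a = s - of_int (floor s)"
  have "fiber A s = snd ` ((A \<inter> ({0..1} \<times> UNIV)) \<inter> ({a} \<times> UNIV))"
  proof
    show "fiber A s \<subseteq> snd ` ((A \<inter> ({0..1} \<times> UNIV)) \<inter> ({a} \<times> UNIV))"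
    proof
      fix y assume "y \<in> fiber A s"
      then have "(a, y) \<in> A \<inter> ({0..1} \<times> UNIV)" using per_strip[OF per, of s y] by (simp add: fiber_def a_def)
      then show "y \<in> snd ` ((A \<inter> ({0..1} \<times> UNIV)) \<inter> ({a} \<times> UNIV))" by force
    qed
    show "snd ` ((A \<inter> ({0..1} \<times> UNIV)) \<inter> ({a} \<times> UNIV)) \<subseteq> fiber A s"
    proof
      fix y assume "y \<in> snd ` ((A \<inter> ({0..1} \<times> UNIV)) \<inter> ({a} \<times> UNIV))"
      then have "(a, y) \<in> A \<inter> ({0..1} \<times> UNIV)" by force
      then show "y \<in> fiber A s" using per_strip[OF per, of s y] by (simp add: fiber_def a_def)
    qed
  qed
  moreover have "compact (snd ` ((A \<inter> ({0..1} \<times> UNIV)) \<inter> ({a} \<times> UNIV)))"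
    by (intro compact_continuous_image continuous_intros compact_Int_closed[OF cpt] closed_Times)
  ultimately show ?thesis by simp
qed

lemma Hn_add: "Hn \<theta> \<gamma> t1 (m + n) \<omega> = Hn \<theta> \<gamma> t1 n ((\<theta> t1 ^^ m) \<omega>) \<circ> Hn \<theta> \<gamma> t1 m \<omega>"
proof (induction n)
  case 0 then show ?case by simp
next
  case (Suc n)
  have "(\<theta> t1 ^^ (m + n)) \<omega> = (\<theta> t1 ^^ n) ((\<theta> t1 ^^ m) \<omega>)"
    by (metis add.commute comp_apply funpow_add)
  have "Hn \<theta> \<gamma> t1 (m + Suc n) \<omega> = \<gamma> ((\<theta> t1 ^^ (m + n)) \<omega>) t1 \<circ> Hn \<theta> \<gamma> t1 (m + n) \<omega>"
    by (simp only: add_Suc_right Hn.simps)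
  also have "\<dots> = Hn \<theta> \<gamma> t1 (Suc n) ((\<theta> t1 ^^ m) \<omega>) \<circ> Hn \<theta> \<gamma> t1 m \<omega>"
    by (simp only: Suc.IH Hn.simps comp_assoc \<open>(\<theta> t1 ^^ (m + n)) \<omega> = (\<theta> t1 ^^ n) ((\<theta> t1 ^^ m) \<omega>)\<close>)
  finally show ?case .
qed



lemma pow_space:
  assumes sp: "\<And>\<omega> t. \<omega> \<in> space M \<Longrightarrow> \<theta> t \<omega> \<in> space M" and w: "\<omega> \<in> space M"
  shows "(\<theta> t1 ^^ n) \<omega> \<in> space M"
  by (induction n) (simp_all add: w sp)

lemma pow_theta:
  assumes sp: "\<And>\<omega> t. \<omega> \<in> space M \<Longrightarrow> \<theta> t \<omega> \<in> space M"
    and add: "\<And>\<omega> t u. \<omega> \<in> space M \<Longrightarrow> \<theta> (t + u) \<omega> = \<theta> t (\<theta> u \<omega>)"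
    and th0: "\<And>\<omega>. \<omega> \<in> space M \<Longrightarrow> \<theta> 0 \<omega> = \<omega>"
    and w: "\<omega> \<in> space M"
  shows "(\<theta> t1 ^^ n) \<omega> = \<theta> (real n * t1) \<omega>"
proof (induction n)
  case 0 then show ?case using th0[OF w] by simp
next
  case (Suc n)
  have "\<theta> (real (Suc n) * t1) \<omega> = \<theta> (t1 + real n * t1) \<omega>" by (simp add: algebra_simps)
  also have "\<dots> = \<theta> t1 (\<theta> (real n * t1) \<omega>)" using add[OF w] .
  finally show ?case using Suc by simp
qed

lemma Hn_X:
  assumes sp: "\<And>\<omega> t. \<omega> \<in> space M \<Longrightarrow> \<theta> t \<omega> \<in> space M"
    and condi_rot: "\<forall>\<omega>\<in>space M. \<forall>s y. y \<in> Y \<omega> \<longrightarrow>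
                      fst (\<gamma> \<omega> t1 (s, y)) = s + 1 \<and> snd (\<gamma> \<omega> t1 (s, y)) \<in> Y (\<theta> t1 \<omega>)"
    and condi_Xsub: "\<forall>\<omega>\<in>space M. X \<omega> \<subseteq> UNIV \<times> Y \<omega>"
    and condi_inv: "\<forall>\<omega>\<in>space M. \<forall>t. \<gamma> \<omega> t ` X \<omega> = X (\<theta> t \<omega>)"
    and w: "\<omega> \<in> space M"
  shows "p \<in> X \<omega> \<Longrightarrow> Hn \<theta> \<gamma> t1 n \<omega> p \<in> X ((\<theta> t1 ^^ n) \<omega>) \<and> fst (Hn \<theta> \<gamma> t1 n \<omega> p) = fst p + real n"
proof (induction n)
  case 0 then show ?case by simp
next
  case (Suc n)
  define q where "q = Hn \<theta> \<gamma> t1 n \<omega> p"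
  define wn where "wn = (\<theta> t1 ^^ n) \<omega>"
  have wn: "wn \<in> space M" unfolding wn_def using pow_space[where M=M and \<theta>=\<theta>, OF sp w] by blast
  have q: "q \<in> X wn" "fst q = fst p + real n" using Suc by (auto simp: q_def wn_def)
  have "q \<in> UNIV \<times> Y wn" using q(1) condi_Xsub wn by blast
  then have "snd q \<in> Y wn" by (simp add: mem_Times_iff)
  then have "fst (\<gamma> wn t1 (fst q, snd q)) = fst q + 1" using condi_rot wn by blast
  moreover have "\<gamma> wn t1 q \<in> X (\<theta> t1 wn)" using condi_inv wn q(1) by blast
  ultimately show ?case using q(2) by (simp add: q_def wn_def)
qed

lemma Hn_image:
  assumes sp: "\<And>\<omega> t. \<omega> \<in> space M \<Longrightarrow> \<theta> t \<omega> \<in> space M"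
    and condi_inv: "\<forall>\<omega>\<in>space M. \<forall>t. \<gamma> \<omega> t ` X \<omega> = X (\<theta> t \<omega>)"
    and w: "\<omega> \<in> space M"
  shows "Hn \<theta> \<gamma> t1 n \<omega> ` X \<omega> = X ((\<theta> t1 ^^ n) \<omega>)"
proof (induction n)
  case 0 then show ?case by simp
next
  case (Suc n)
  have wn: "(\<theta> t1 ^^ n) \<omega> \<in> space M" using pow_space[where M=M and \<theta>=\<theta>, OF sp w] by blast
  have "Hn \<theta> \<gamma> t1 (Suc n) \<omega> ` X \<omega> = \<gamma> ((\<theta> t1 ^^ n) \<omega>) t1 ` (Hn \<theta> \<gamma> t1 n \<omega> ` X \<omega>)"
    by (simp add: image_comp)
  also have "\<dots> = X ((\<theta> t1 ^^ Suc n) \<omega>)" using Suc condi_inv wn by simp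
  finally show ?case .
qed

lemma Hn_inj_cont:
  assumes sp: "\<And>\<omega> t. \<omega> \<in> space M \<Longrightarrow> \<theta> t \<omega> \<in> space M"
    and cocycle: "C1_perfect_cocycle M \<theta> \<gamma>"
    and w: "\<omega> \<in> space M"
  shows "inj (Hn \<theta> \<gamma> t1 n \<omega>) \<and> continuous_on UNIV (Hn \<theta> \<gamma> t1 n \<omega>)"
proof (induction n)
  case 0 then show ?case by (simp add: continuous_on_id)
next
  case (Suc n)
  define wn where "wn = (\<theta> t1 ^^ n) \<omega>"
  have wn: "wn \<in> space M" unfolding wn_def using pow_space[where M=M and \<theta>=\<theta>, OF sp w] by blast
  have bij: "bij (\<gamma> wn t1)" using cocycle wn by (simp add: C1_perfect_cocycle_def C1_diffeo_def)
  have c: "continuous_on UNIV (\<lambda>(t, z). \<gamma> wn t z)" using cocycle wn by (simp add: C1_perfect_cocycle_def)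
  have "continuous_on UNIV (\<lambda>z. (\<lambda>(t, z). \<gamma> wn t z) (t1, z))"
    by (rule continuous_on_compose2[OF c]) (auto intro: continuous_intros)
  then have cg: "continuous_on UNIV (\<gamma> wn t1)" by simp
  have "inj (\<gamma> wn t1 \<circ> Hn \<theta> \<gamma> t1 n \<omega>)" using bij Suc by (simp add: bij_is_inj inj_compose)
  moreover have "continuous_on UNIV (\<gamma> wn t1 \<circ> Hn \<theta> \<gamma> t1 n \<omega>)"
    using Suc cg by (metis continuous_on_compose continuous_on_subset subset_UNIV)
  ultimately show ?case by (simp add: wn_def comp_def)
qed



theorem lemma3p2:
  fixes M :: "'w measure"
    and \<theta> :: "real \<Rightarrow> 'w \<Rightarrow> 'w"
    and \<gamma> :: "'w \<Rightarrow> real \<Rightarrow> real \<times> 'd::euclidean_space \<Rightarrow> real \<times> 'd"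
    and Y :: "'w \<Rightarrow> 'd set"
    and X :: "'w \<Rightarrow> (real \<times> 'd) set"
    and t1 :: real
  assumes mds: "metric_dynamical_system M \<theta>"
    and cocycle: "C1_perfect_cocycle M \<theta> \<gamma>"
    and condi_Y: "random_compact_set M Y"
    and condi_t1: "t1 > 0"
    and condi_rot: "\<forall>\<omega>\<in>space M. \<forall>s y. y \<in> Y \<omega> \<longrightarrow>
                      fst (\<gamma> \<omega> t1 (s, y)) = s + 1 \<and> snd (\<gamma> \<omega> t1 (s, y)) \<in> Y (\<theta> t1 \<omega>)"
    and condi_X: "random_compact_set_cyl M X"
    and condi_Xsub: "\<forall>\<omega>\<in>space M. X \<omega> \<subseteq> UNIV \<times> Y \<omega>"
    and condi_inv: "\<forall>\<omega>\<in>space M. \<forall>t. \<gamma> \<omega> t ` X \<omega> = X (\<theta> t \<omega>)"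
    and condi_proj: "\<forall>\<omega>\<in>space M. fst ` X \<omega> = UNIV"
    and condi_diam: "\<exists>b>0. \<forall>\<omega>\<in>space M. diameter (snd ` X \<omega>) < b"
    and condii: "\<exists>\<delta>1>0. \<exists>L1>0. \<forall>\<omega>\<in>space M. \<forall>s y. (s, y) \<in> X \<omega> \<longrightarrow>
                   (\<exists>f :: real \<Rightarrow> 'd. (\<forall>x. f (x + 1) = f x) \<and> L1-lipschitz_on UNIV f \<and>
                       f s = y \<and> (\<forall>s'\<in>{s - \<delta>1 .. s + \<delta>1}. (s', f s') \<in> X \<omega>))"
    and condiii: "\<exists>lam<1. \<exists>\<epsilon>1>0. \<exists>n0::nat.
          (AE \<omega> in M. \<forall>s y. (s, y) \<in> nbhd (X \<omega>) \<epsilon>1 \<longrightarrow>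
              (\<exists>D. ((\<lambda>y'. gn \<theta> \<gamma> t1 n0 \<omega> (s, y')) has_derivative D) (at y) \<and> onorm D \<le> lam)) \<and>
          (\<exists>c. AE \<omega> in M. \<forall>s y. (s, y) \<in> nbhd (X \<omega>) \<epsilon>1 \<longrightarrow>
              (\<exists>v. ((\<lambda>s'. gn \<theta> \<gamma> t1 n0 \<omega> (s', y)) has_vector_derivative v) (at s) \<and> norm v \<le> c))"
  shows "\<forall>l>0. AE \<omega> in M. Gsize (X \<omega>) < ereal l"
proof -
  from mds have meas: "\<And>t. \<theta> t \<in> measurable M M" and distr_eq: "\<And>t. distr M M (\<theta> t) = M"
    and th0: "\<And>\<omega>. \<omega> \<in> space M \<Longrightarrow> \<theta> 0 \<omega> = \<omega>"
    and thadd: "\<And>\<omega> t u. \<omega> \<in> space M \<Longrightarrow> \<theta> (t + u) \<omega> = \<theta> t (\<theta> u \<omega>)"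
    unfolding metric_dynamical_system_def by blast+
  have sp: "\<And>\<omega> t. \<omega> \<in> space M \<Longrightarrow> \<theta> t \<omega> \<in> space M" by (rule measurable_space[OF meas])
  obtain lam \<epsilon>1 n0 where lam: "lam < 1" and e1: "\<epsilon>1 > 0"
    and AEP: "AE \<omega> in M. \<forall>s y. (s, y) \<in> nbhd (X \<omega>) \<epsilon>1 \<longrightarrow>
              (\<exists>D. ((\<lambda>y'. gn \<theta> \<gamma> t1 n0 \<omega> (s, y')) has_derivative D) (at y) \<and> onorm D \<le> lam)"
    using condiii by blast
  define PP where "PP \<omega> \<longleftrightarrow> (\<forall>s y. (s, y) \<in> nbhd (X \<omega>) \<epsilon>1 \<longrightarrow>
              (\<exists>D. ((\<lambda>y'. gn \<theta> \<gamma> t1 n0 \<omega> (s, y')) has_derivative D) (at y) \<and> onorm D \<le> lam))" for \<omega>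
  define \<mu> where "\<mu> = max lam 0"
  have mu: "0 \<le> \<mu>" "\<mu> < 1" using lam by (auto simp: \<mu>_def)
  define good where "good \<omega> \<longleftrightarrow> \<omega> \<in> space M \<and> (\<forall>r::int. PP (\<theta> (of_int r * t1) \<omega>))" for \<omega>
  have AEc: "AE \<omega> in M. PP (\<theta> c \<omega>)" for c
  proof -
    have "AE x in M. PP x" using AEP unfolding PP_def .
    then have "AE x in distr M M (\<theta> c). PP x" by (simp only: distr_eq)
    then show ?thesis by (rule AE_distrD[OF meas])
  qed
  have AEr: "AE \<omega> in M. \<forall>r::int. PP (\<theta> (of_int r * t1) \<omega>)"
    by (simp add: AE_all_countable AEc)
  have AEgood: "AE \<omega> in M. good \<omega>"
    using AE_space AEr by eventually_elim (simp add: good_def)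
  have good_shift: "good (\<theta> (of_int q * t1) \<omega>)" if g: "good \<omega>" for \<omega> q
  proof -
    have w: "\<omega> \<in> space M" using g by (simp add: good_def)
    have "PP (\<theta> (of_int r * t1) (\<theta> (of_int q * t1) \<omega>))" for r
    proof -
      have all: "\<forall>r::int. PP (\<theta> (of_int r * t1) \<omega>)" using g by (simp add: good_def)
      have "PP (\<theta> (of_int (r + q) * t1) \<omega>)" using spec[OF all, of "r + q"] .
      moreover have "\<theta> (of_int r * t1) (\<theta> (of_int q * t1) \<omega>) = \<theta> (of_int (r + q) * t1) \<omega>"
        using thadd[OF w, of "of_int r * t1" "of_int q * t1"] by (simp add: algebra_simps)
      ultimately show ?thesis by simp
    qed
    then show ?thesis using sp[OF w] by (simp add: good_def)
  qed
  have BB: "norm (gn \<theta> \<gamma> t1 n0 \<omega> (s, u) - gn \<theta> \<gamma> t1 n0 \<omega> (s, v)) \<le> \<mu> * norm (u - v)"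
    if g: "good \<omega>" and u: "(s, u) \<in> X \<omega>" and v: "(s, v) \<in> X \<omega>" and uv: "norm (u - v) < \<epsilon>1"
    for \<omega> s u v
  proof -
    have w: "\<omega> \<in> space M" using g by (simp add: good_def)
    have "PP (\<theta> (of_int 0 * t1) \<omega>)" using g unfolding good_def by blast
    then have P: "PP \<omega>" using th0[OF w] by simp
    define D where "D w = (SOME D. ((\<lambda>y'. gn \<theta> \<gamma> t1 n0 \<omega> (s, y')) has_derivative D) (at w) \<and> onorm D \<le> lam)" for w
    have Dw: "((\<lambda>y'. gn \<theta> \<gamma> t1 n0 \<omega> (s, y')) has_derivative D w) (at w) \<and> onorm (D w) \<le> lam"
      if "w \<in> closed_segment u v" for w
    proof -
      have "norm (w - u) \<le> norm (v - u)" using segment_bound(1)[OF that] .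
      also have "\<dots> < \<epsilon>1" using uv by (simp add: norm_minus_commute)
      finally have "(s, w) \<in> nbhd (X \<omega>) \<epsilon>1" using u unfolding nbhd_def by auto
      then have "\<exists>D. ((\<lambda>y'. gn \<theta> \<gamma> t1 n0 \<omega> (s, y')) has_derivative D) (at w) \<and> onorm D \<le> lam"
        using P unfolding PP_def by blast
      then show ?thesis unfolding D_def by (rule someI_ex)
    qed
    show ?thesis
    proof (rule differentiable_bound[where f="\<lambda>y'. gn \<theta> \<gamma> t1 n0 \<omega> (s, y')" and f'=D and S="closed_segment u v"])
      show "convex (closed_segment u v)" by (rule convex_closed_segment)
      show "((\<lambda>y'. gn \<theta> \<gamma> t1 n0 \<omega> (s, y')) has_derivative D w) (at w within closed_segment u v)"
        if "w \<in> closed_segment u v" for w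
        using Dw[OF that] by (blast intro: has_derivative_at_withinI)
      show "onorm (D w) \<le> \<mu>" if "w \<in> closed_segment u v" for w
        using Dw[OF that] max.cobounded1[of lam 0] unfolding \<mu>_def by linarith
      show "u \<in> closed_segment u v" by simp
      show "v \<in> closed_segment u v" by simp
    qed
  qed
  have CL: "\<forall>\<omega> s u v. good \<omega> \<longrightarrow> (s, u) \<in> X \<omega> \<longrightarrow> (s, v) \<in> X \<omega> \<longrightarrow> norm (u - v) < \<epsilon>1 \<longrightarrow>
      norm (snd (Hn \<theta> \<gamma> t1 (m * n0) \<omega> (s, u)) - snd (Hn \<theta> \<gamma> t1 (m * n0) \<omega> (s, v))) \<le> \<mu> ^ m * norm (u - v)"
    for m
  proof (induction m)
    case 0 then show ?case by simp
  next
    case (Suc m)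
    show ?case
    proof (intro allI impI)
      fix \<omega> s u v assume g: "good \<omega>" and u: "(s, u) \<in> X \<omega>" and v: "(s, v) \<in> X \<omega>"
        and uv: "norm (u - v) < \<epsilon>1"
      have w: "\<omega> \<in> space M" using g by (simp add: good_def)
      define \<omega>1 where "\<omega>1 = (\<theta> t1 ^^ n0) \<omega>"
      have w1: "\<omega>1 = \<theta> (of_int (int n0) * t1) \<omega>"
        using pow_theta[where M=M and \<theta>=\<theta>, OF sp thadd th0 w] by (simp add: \<omega>1_def)
      have g1: "good \<omega>1" using good_shift[OF g, of "int n0"] w1 by simp
      define p where "p = Hn \<theta> \<gamma> t1 n0 \<omega> (s, u)"
      define q where "q = Hn \<theta> \<gamma> t1 n0 \<omega> (s, v)"
      have pX: "p \<in> X \<omega>1" "fst p = s + real n0"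
        using Hn_X[where M=M and \<theta>=\<theta>, OF sp condi_rot condi_Xsub condi_inv w u] by (simp_all add: p_def \<omega>1_def)
      have qX: "q \<in> X \<omega>1" "fst q = s + real n0"
        using Hn_X[where M=M and \<theta>=\<theta>, OF sp condi_rot condi_Xsub condi_inv w v] by (simp_all add: q_def \<omega>1_def)
      have b: "norm (snd p - snd q) \<le> \<mu> * norm (u - v)"
        using BB[OF g u v uv] by (simp add: gn_def p_def q_def)
      also have "\<dots> \<le> norm (u - v)" using mu by (simp add: mult_left_le_one_le)
      finally have pq: "norm (snd p - snd q) < \<epsilon>1" using uv by simp
      have pe: "p = (s + real n0, snd p)" and qe: "q = (s + real n0, snd q)"
        using pX(2) qX(2) by (simp_all add: prod_eq_iff)
      have "(s + real n0, snd p) \<in> X \<omega>1" "(s + real n0, snd q) \<in> X \<omega>1" using pX(1) qX(1) pe qe by simp_all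
      then have IH: "norm (snd (Hn \<theta> \<gamma> t1 (m * n0) \<omega>1 p) - snd (Hn \<theta> \<gamma> t1 (m * n0) \<omega>1 q))
          \<le> \<mu> ^ m * norm (snd p - snd q)"
        using Suc.IH g1 pq pe qe by metis
      have split: "Hn \<theta> \<gamma> t1 (Suc m * n0) \<omega> = Hn \<theta> \<gamma> t1 (m * n0) \<omega>1 \<circ> Hn \<theta> \<gamma> t1 n0 \<omega>"
        using Hn_add[of \<theta> \<gamma> t1 n0 "m * n0" \<omega>] by (simp add: \<omega>1_def)
      have "norm (snd (Hn \<theta> \<gamma> t1 (Suc m * n0) \<omega> (s, u)) - snd (Hn \<theta> \<gamma> t1 (Suc m * n0) \<omega> (s, v)))
          = norm (snd (Hn \<theta> \<gamma> t1 (m * n0) \<omega>1 p) - snd (Hn \<theta> \<gamma> t1 (m * n0) \<omega>1 q))"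
        by (simp only: split comp_apply p_def q_def)
      also have "\<dots> \<le> \<mu> ^ m * norm (snd p - snd q)" by (rule IH)
      also have "\<dots> \<le> \<mu> ^ m * (\<mu> * norm (u - v))" using b mu by (intro mult_left_mono) auto
      also have "\<dots> = \<mu> ^ Suc m * norm (u - v)" by simp
      finally show "norm (snd (Hn \<theta> \<gamma> t1 (Suc m * n0) \<omega> (s, u)) - snd (Hn \<theta> \<gamma> t1 (Suc m * n0) \<omega> (s, v)))
          \<le> \<mu> ^ Suc m * norm (u - v)" .
    qed
  qed
  have core: "norm (x - x') < e"
    if g: "good \<omega>" and G: "G \<in> components (fiber (X \<omega>) s)" and x: "x \<in> G" and x': "x' \<in> G"
      and e: "e > 0" for \<omega> s G x x' e
  proof -
    have w: "\<omega> \<in> space M" using g by (simp add: good_def)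
    obtain b where b: "b > 0" "\<forall>\<omega>\<in>space M. diameter (snd ` X \<omega>) < b" using condi_diam by blast
    have e2: "\<epsilon>1 / 2 > 0" using e1 by simp
    have TB: "\<forall>\<epsilon>>0. \<exists>k. finite k \<and> k \<subseteq> cball (0::'d) b \<and> cball 0 b \<subseteq> (\<Union>x\<in>k. ball x \<epsilon>)"
      by (rule seq_compact_imp_totally_bounded[OF compact_imp_seq_compact[OF compact_cball]])
    obtain C where C: "finite C" "cball (0::'d) b \<subseteq> (\<Union>c\<in>C. ball c (\<epsilon>1 / 2))"
      using TB[rule_format, OF e2] by auto
    define K where "K = real (card C) + 1"
    have K: "K > 0" by (simp add: K_def)
    have pos: "e / (K * \<epsilon>1) > 0" using e K e1 by simp
    have "(\<lambda>n. \<mu> ^ n) \<longlonglongrightarrow> 0" using mu by (intro LIMSEQ_power_zero) simp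
    from order_tendstoD(2)[OF this pos] obtain k0 where "\<forall>n\<ge>k0. \<mu> ^ n < e / (K * \<epsilon>1)"
      unfolding eventually_sequentially by blast
    then have k: "\<mu> ^ k0 < e / (K * \<epsilon>1)" by blast
    define k where "k = k0"
    have kk: "\<mu> ^ k * (K * \<epsilon>1) < e"
      using k pos_less_divide_eq[of "K * \<epsilon>1"] K e1 by (simp add: k_def)
    define N where "N = k * n0"
    define \<omega>' where "\<omega>' = \<theta> (- (real N * t1)) \<omega>"
    have w': "\<omega>' \<in> space M" using sp[OF w] by (simp add: \<omega>'_def)
    have g': "good \<omega>'" using good_shift[OF g, of "- int N"] by (simp add: \<omega>'_def)
    have bk: "(\<theta> t1 ^^ N) \<omega>' = \<omega>"
    proof -
      have "(\<theta> t1 ^^ N) \<omega>' = \<theta> (real N * t1) \<omega>'" using pow_theta[where M=M and \<theta>=\<theta>, OF sp thadd th0 w'] .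
      also have "\<dots> = \<theta> (real N * t1 + - (real N * t1)) \<omega>" using thadd[OF w, of "real N * t1" "- (real N * t1)"] by (simp add: \<omega>'_def)
      also have "\<dots> = \<omega>" using th0[OF w] by simp
      finally show ?thesis .
    qed
    define s' where "s' = s - real N"
    define F where "F = fiber (X \<omega>) s"
    define F' where "F' = fiber (X \<omega>') s'"
    define f where "f y = snd (Hn \<theta> \<gamma> t1 N \<omega>' (s', y))" for y
    have perX: "\<forall>s y. (s, y) \<in> X \<omega>' \<longleftrightarrow> (s + 1, y) \<in> X \<omega>'"
      and cptX: "compact (X \<omega>' \<inter> ({0..1} \<times> UNIV))"
      using condi_X w' unfolding random_compact_set_cyl_def by blast+
    have cF': "compact F'" unfolding F'_def by (rule fiber_compact[OF perX cptX])
    have HX: "Hn \<theta> \<gamma> t1 N \<omega>' p \<in> X \<omega> \<and> fst (Hn \<theta> \<gamma> t1 N \<omega>' p) = fst p + real N" if "p \<in> X \<omega>'" for p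
      using Hn_X[where M=M and \<theta>=\<theta> and n=N, OF sp condi_rot condi_Xsub condi_inv w' that] bk by simp
    have HIC: "inj (Hn \<theta> \<gamma> t1 N \<omega>') \<and> continuous_on UNIV (Hn \<theta> \<gamma> t1 N \<omega>')"
      by (rule Hn_inj_cont[where M=M and \<theta>=\<theta>, OF sp cocycle w'])
    have Hinj: "inj (Hn \<theta> \<gamma> t1 N \<omega>')" and Hcont: "continuous_on UNIV (Hn \<theta> \<gamma> t1 N \<omega>')"
      using HIC by auto
    have "Hn \<theta> \<gamma> t1 N \<omega>' ` X \<omega>' = X ((\<theta> t1 ^^ N) \<omega>')"
      by (rule Hn_image[where M=M and \<theta>=\<theta>, OF sp condi_inv w'])
    then have Himg: "Hn \<theta> \<gamma> t1 N \<omega>' ` X \<omega>' = X \<omega>" using bk by simp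
    have fpt: "Hn \<theta> \<gamma> t1 N \<omega>' (s', y) = (s, f y)" if "y \<in> F'" for y
    proof -
      have "(s', y) \<in> X \<omega>'" using that by (simp add: F'_def fiber_def)
      from HX[OF this] show ?thesis by (simp add: prod_eq_iff f_def s'_def)
    qed
    have fimg: "f ` F' = F"
    proof
      show "f ` F' \<subseteq> F"
      proof
        fix y' assume "y' \<in> f ` F'"
        then obtain y where y: "y \<in> F'" "y' = f y" by blast
        have "(s', y) \<in> X \<omega>'" using y(1) by (simp add: F'_def fiber_def)
        then have "Hn \<theta> \<gamma> t1 N \<omega>' (s', y) \<in> X \<omega>" using HX by blast
        then show "y' \<in> F" using fpt[OF y(1)] y(2) by (simp add: F_def fiber_def)
      qed
      show "F \<subseteq> f ` F'"
      proof
        fix y'' assume "y'' \<in> F"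
        then have "(s, y'') \<in> X \<omega>" by (simp add: F_def fiber_def)
        then have "(s, y'') \<in> Hn \<theta> \<gamma> t1 N \<omega>' ` X \<omega>'" using Himg by simp
        then obtain p where p0: "(s, y'') = Hn \<theta> \<gamma> t1 N \<omega>' p" "p \<in> X \<omega>'" by (rule imageE)
        have p: "p \<in> X \<omega>'" "Hn \<theta> \<gamma> t1 N \<omega>' p = (s, y'')" using p0 by simp_all
        have "fst p = s'" using HX[OF p(1)] p(2) by (simp add: s'_def)
        then have pe: "p = (s', snd p)" by (simp add: prod_eq_iff)
        have "snd p \<in> F'" using p(1) pe unfolding F'_def fiber_def by (metis mem_Collect_eq)
        moreover have "f (snd p) = y''" using p(2) pe unfolding f_def by (metis snd_conv)
        ultimately show "y'' \<in> f ` F'" by blast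
      qed
    qed
    have finj: "inj_on f F'"
    proof (rule inj_onI)
      fix y1 y2 assume "y1 \<in> F'" "y2 \<in> F'" "f y1 = f y2"
      then have "Hn \<theta> \<gamma> t1 N \<omega>' (s', y1) = Hn \<theta> \<gamma> t1 N \<omega>' (s', y2)" using fpt by simp
      then show "y1 = y2" using Hinj by (auto dest: injD)
    qed
    have fcont: "continuous_on F' f"
    proof -
      have "continuous_on UNIV (\<lambda>y. snd (Hn \<theta> \<gamma> t1 N \<omega>' (s', y)))"
        by (intro continuous_on_snd continuous_on_compose2[OF Hcont]) (auto intro: continuous_intros)
      then show ?thesis unfolding f_def by (rule continuous_on_subset) simp
    qed
    obtain g0 where hom: "homeomorphism F' F f g0"
      using homeomorphism_compact[OF cF' fcont fimg finj] by blast
    have GF: "G \<subseteq> F" and Gc: "connected G"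
      using G in_components_subset in_components_connected by (auto simp: F_def)
    define G' where "G' = g0 ` G"
    have g0c: "continuous_on F g0" and g0F: "g0 ` F = F'" and fg: "\<And>y. y \<in> F \<Longrightarrow> f (g0 y) = y"
      using hom unfolding homeomorphism_def by auto
    have G'c: "connected G'" unfolding G'_def
      by (rule connected_continuous_image[OF continuous_on_subset[OF g0c GF] Gc])
    have G'F': "G' \<subseteq> F'" using GF g0F unfolding G'_def by blast
    define xp where "xp = g0 x"
    define xp' where "xp' = g0 x'"
    have xpG: "xp \<in> G'" "xp' \<in> G'" unfolding G'_def xp_def xp'_def using x x' by auto
    have fx: "f xp = x" "f xp' = x'" using fg GF x x' by (auto simp: xp_def xp'_def)
    define P where "P c = G' \<inter> ball (xp + c) (\<epsilon>1 / 2)" for c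
    have bdd: "bounded (snd ` X \<omega>')" by (rule snd_bounded[OF perX cptX])
    have inX: "(s', y) \<in> X \<omega>'" if "y \<in> G'" for y
      using that G'F' by (auto simp: F'_def fiber_def)
    have inS: "y \<in> snd ` X \<omega>'" if "y \<in> G'" for y
      using inX[OF that] by force
    have cov: "G' \<subseteq> (\<Union>c\<in>C. P c)"
    proof
      fix y assume y: "y \<in> G'"
      have "dist xp y \<le> diameter (snd ` X \<omega>')" by (rule diameter_bounded_bound[OF bdd inS[OF xpG(1)] inS[OF y]])
      also have "\<dots> < b" using b(2) w' by blast
      finally have "y - xp \<in> cball 0 b" by (simp add: dist_norm norm_minus_commute)
      then obtain c where c: "c \<in> C" "y - xp \<in> ball c (\<epsilon>1 / 2)" using C(2) by blast
      then have "y \<in> ball (xp + c) (\<epsilon>1 / 2)" by (simp add: dist_norm algebra_simps)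
      then show "y \<in> (\<Union>c\<in>C. P c)" using c(1) y by (auto simp: P_def)
    qed
    have op: "openin (top_of_set G') (P c)" if "c \<in> C" for c
      unfolding P_def by (rule openin_open_Int) simp
    have sm: "dist (f u) (f v) \<le> \<mu> ^ k * \<epsilon>1" if "c \<in> C" "u \<in> P c" "v \<in> P c" for c u v
    proof -
      have uv: "u \<in> G'" "v \<in> G'" "dist (xp + c) u < \<epsilon>1 / 2" "dist (xp + c) v < \<epsilon>1 / 2"
        using that by (auto simp: P_def)
      have "dist u v < \<epsilon>1" using dist_triangle_half_l[of u "xp + c" \<epsilon>1 v] uv(3,4) by (simp add: dist_commute)
      then have nuv: "norm (u - v) < \<epsilon>1" by (simp add: dist_norm)
      have "norm (f u - f v) \<le> \<mu> ^ k * norm (u - v)"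
        using CL[of k] g' nuv inX[OF uv(1)] inX[OF uv(2)] unfolding f_def N_def by blast
      also have "\<dots> \<le> \<mu> ^ k * \<epsilon>1" using nuv mu by (intro mult_left_mono) auto
      finally show ?thesis by (simp add: dist_norm)
    qed
    have "dist (f xp) (f xp') \<le> (real (card C) + 1) * (\<mu> ^ k * \<epsilon>1)"
      by (rule chain_bound[OF G'c C(1) cov op sm xpG])
    then have "norm (x - x') \<le> K * (\<mu> ^ k * \<epsilon>1)" using fx by (simp add: dist_norm K_def)
    also have "\<dots> < e" using kk by (simp add: algebra_simps)
    finally show ?thesis .
  qed
  have diam0: "diameter G \<le> 0" if g: "good \<omega>" and G: "G \<in> components (fiber (X \<omega>) s)" for \<omega> s G
  proof (rule diameter_le)
    show "G \<noteq> {} \<or> 0 \<le> (0::real)" by simp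
    fix x y assume xy: "x \<in> G" "y \<in> G"
    show "norm (x - y) \<le> 0"
    proof (rule ccontr)
      assume "\<not> norm (x - y) \<le> 0"
      then have "norm (x - y) > 0" by simp
      from core[OF g G xy this] show False by simp
    qed
  qed
  show ?thesis
  proof (intro allI impI)
    fix l :: real assume l: "l > 0"
    show "AE \<omega> in M. Gsize (X \<omega>) < ereal l"
      using AEgood
    proof eventually_elim
      fix \<omega> assume g: "good \<omega>"
      have "Gsize (X \<omega>) \<le> ereal 0"
        unfolding Gsize_def radius_def
      proof (rule SUP_least)
        fix G assume "G \<in> (\<Union>s. components (fiber (X \<omega>) s))"
        then obtain s where "G \<in> components (fiber (X \<omega>) s)" by blast
        then have "diameter G \<le> 0" by (rule diam0[OF g])
        then show "ereal (diameter G / 2) \<le> ereal 0" by simp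
      qed
      also have "ereal 0 < ereal l" using l by simp
      finally show "Gsize (X \<omega>) < ereal l" .
    qed
  qed
qed

end
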